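(* Let $M$ be a finite $\Sigma$-Rickart right $R$-module and $S=\mathrm{End}_R(M)$. Then (i) $S$ is a right semi-hereditary ring; (ii) $S$ is a right coherent ring; (iii) every finitely $M$-generated submodule of $M$ is $M$-coherent.
   Context: $M^{(n)}$ is the direct sum of $n$ copies of $M$. $M$ is Rickart if $\ker\varphi$ is a direct summand of $M$ for all $\varphi\in\mathrm{End}_R(M)$; $M$ is finite $\Sigma$-Rickart if $M^{(n)}$ is Rickart for all $n>0$. A ring is right semi-hereditary if every finitely generated right ideal is projective, and right coherent if every finitely generated right ideal is finitely presented. A module $N$ is finitely $M$-generated if there is an epimorphism $M^{(n)}\to N$ for some $n>0$; such an $N$ is $M$-coherent if for every $n>0$ and every homomorphism $\rho:M^{(n)}\to N$, $\ker\rho$ is finitely $M$-generated. *)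

theory Defs
  imports Main "HOL-Library.Function_Algebras"
begin

text \<open>A ring is given by a carrier Rc inside an additive group type, a multiplication
  and a unit.\<close>

definition rmod :: "'r::ab_group_add set \<Rightarrow> ('r \<Rightarrow> 'r \<Rightarrow> 'r) \<Rightarrow> 'r
    \<Rightarrow> ('a::ab_group_add \<Rightarrow> 'r \<Rightarrow> 'a) \<Rightarrow> 'a set \<Rightarrow> bool" where
  "rmod Rc mul one act C \<longleftrightarrow>
     0 \<in> C \<and> (\<forall>x\<in>C. \<forall>y\<in>C. x + y \<in> C) \<and> (\<forall>x\<in>C. - x \<in> C) \<and>
     (\<forall>x\<in>C. \<forall>r\<in>Rc. act x r \<in> C) \<and>
     (\<forall>x\<in>C. \<forall>y\<in>C. \<forall>r\<in>Rc. act (x + y) r = act x r + act y r) \<and>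
     (\<forall>x\<in>C. \<forall>r\<in>Rc. \<forall>s\<in>Rc. act x (r + s) = act x r + act x s \<and>
                             act x (mul r s) = act (act x r) s) \<and>
     (\<forall>x\<in>C. act x one = x)"

definition rhom :: "'r set \<Rightarrow> ('a::ab_group_add \<Rightarrow> 'r \<Rightarrow> 'a) \<Rightarrow> 'a set
    \<Rightarrow> ('b::ab_group_add \<Rightarrow> 'r \<Rightarrow> 'b) \<Rightarrow> 'b set \<Rightarrow> ('a \<Rightarrow> 'b) \<Rightarrow> bool" where
  "rhom Rc act1 C1 act2 C2 f \<longleftrightarrow>
     (\<forall>x\<in>C1. f x \<in> C2) \<and> (\<forall>x\<in>C1. \<forall>y\<in>C1. f (x + y) = f x + f y) \<and>
     (\<forall>x\<in>C1. \<forall>r\<in>Rc. f (act1 x r) = act2 (f x) r)"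

definition submod :: "'r::ab_group_add set \<Rightarrow> ('r \<Rightarrow> 'r \<Rightarrow> 'r) \<Rightarrow> 'r
    \<Rightarrow> ('a::ab_group_add \<Rightarrow> 'r \<Rightarrow> 'a) \<Rightarrow> 'a set \<Rightarrow> 'a set \<Rightarrow> bool" where
  "submod Rc mul one act N C \<longleftrightarrow> N \<subseteq> C \<and> rmod Rc mul one act N"

definition kernel :: "'a set \<Rightarrow> ('a \<Rightarrow> 'b::zero) \<Rightarrow> 'a set" where
  "kernel C f = {x \<in> C. f x = 0}"

definition dsummand :: "'r::ab_group_add set \<Rightarrow> ('r \<Rightarrow> 'r \<Rightarrow> 'r) \<Rightarrow> 'r
    \<Rightarrow> ('a::ab_group_add \<Rightarrow> 'r \<Rightarrow> 'a) \<Rightarrow> 'a set \<Rightarrow> 'a set \<Rightarrow> bool" where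
  "dsummand Rc mul one act C N \<longleftrightarrow> submod Rc mul one act N C \<and>
     (\<exists>K. submod Rc mul one act K C \<and> N \<inter> K = {0} \<and> C = {a + b |a b. a \<in> N \<and> b \<in> K})"

text \<open>Endomorphisms, normalised to be 0 outside the carrier (so that End is a ring
  under pointwise addition and composition).\<close>
definition endos :: "'r set \<Rightarrow> ('a::ab_group_add \<Rightarrow> 'r \<Rightarrow> 'a) \<Rightarrow> 'a set \<Rightarrow> ('a \<Rightarrow> 'a) set" where
  "endos Rc act C = {f. rhom Rc act C act C f \<and> (\<forall>x. x \<notin> C \<longrightarrow> f x = 0)}"

definition end_one :: "'a::zero set \<Rightarrow> 'a \<Rightarrow> 'a" where
  "end_one C = (\<lambda>x. if x \<in> C then x else 0)"

definition rickart :: "'r::ab_group_add set \<Rightarrow> ('r \<Rightarrow> 'r \<Rightarrow> 'r) \<Rightarrow> 'r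
    \<Rightarrow> ('a::ab_group_add \<Rightarrow> 'r \<Rightarrow> 'a) \<Rightarrow> 'a set \<Rightarrow> bool" where
  "rickart Rc mul one act C \<longleftrightarrow> rmod Rc mul one act C \<and>
     (\<forall>f\<in>endos Rc act C. dsummand Rc mul one act C (kernel C f))"

text \<open>M^(n): n-tuples (indices < n) of elements of M, componentwise action.\<close>
definition dsum :: "nat \<Rightarrow> 'a::zero set \<Rightarrow> (nat \<Rightarrow> 'a) set" where
  "dsum n C = {v. (\<forall>i<n. v i \<in> C) \<and> (\<forall>i\<ge>n. v i = 0)}"

definition dact :: "('a \<Rightarrow> 'r \<Rightarrow> 'a) \<Rightarrow> (nat \<Rightarrow> 'a) \<Rightarrow> 'r \<Rightarrow> (nat \<Rightarrow> 'a)" where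
  "dact act v r = (\<lambda>i. act (v i) r)"

definition fin_sigma_rickart :: "'r::ab_group_add set \<Rightarrow> ('r \<Rightarrow> 'r \<Rightarrow> 'r) \<Rightarrow> 'r
    \<Rightarrow> ('a::ab_group_add \<Rightarrow> 'r \<Rightarrow> 'a) \<Rightarrow> 'a set \<Rightarrow> bool" where
  "fin_sigma_rickart Rc mul one act C \<longleftrightarrow>
     (\<forall>n>0. rickart Rc mul one (dact act) (dsum n C))"

definition fgen :: "'r set \<Rightarrow> ('a::ab_group_add \<Rightarrow> 'r \<Rightarrow> 'a) \<Rightarrow> 'a set \<Rightarrow> bool" where
  "fgen Rc act C \<longleftrightarrow> (\<exists>xs. set xs \<subseteq> C \<and>
     C = {\<Sum>i<length xs. act (xs ! i) (rs i) |rs. \<forall>i<length xs. rs i \<in> Rc})"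

definition free_mod :: "'r::ab_group_add set \<Rightarrow> 'i set \<Rightarrow> ('i \<Rightarrow> 'r) set" where
  "free_mod Rc X = {v. (\<forall>i\<in>X. v i \<in> Rc) \<and> (\<forall>i. i \<notin> X \<longrightarrow> v i = 0) \<and> finite {i. v i \<noteq> 0}}"

definition free_act :: "('r \<Rightarrow> 'r \<Rightarrow> 'r) \<Rightarrow> 'i set \<Rightarrow> ('i \<Rightarrow> 'r::zero) \<Rightarrow> 'r \<Rightarrow> ('i \<Rightarrow> 'r)" where
  "free_act mul X v r = (\<lambda>i. if i \<in> X then mul (v i) r else 0)"

text \<open>Projective: a direct summand of a free module (index sets may be taken in the
  element type, since a module is a quotient of the free module on its own elements).\<close>
definition projective :: "'r::ab_group_add set \<Rightarrow> ('r \<Rightarrow> 'r \<Rightarrow> 'r) \<Rightarrow> 'r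
    \<Rightarrow> ('a::ab_group_add \<Rightarrow> 'r \<Rightarrow> 'a) \<Rightarrow> 'a set \<Rightarrow> bool" where
  "projective Rc mul one act C \<longleftrightarrow> rmod Rc mul one act C \<and>
     (\<exists>(X::'a set) \<pi> \<iota>.
        rhom Rc (free_act mul X) (free_mod Rc X) act C \<pi> \<and> \<pi> ` free_mod Rc X = C \<and>
        rhom Rc act C (free_act mul X) (free_mod Rc X) \<iota> \<and> (\<forall>x\<in>C. \<pi> (\<iota> x) = x))"

definition fin_pres :: "'r::ab_group_add set \<Rightarrow> ('r \<Rightarrow> 'r \<Rightarrow> 'r) \<Rightarrow> 'r
    \<Rightarrow> ('a::ab_group_add \<Rightarrow> 'r \<Rightarrow> 'a) \<Rightarrow> 'a set \<Rightarrow> bool" where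
  "fin_pres Rc mul one act C \<longleftrightarrow> rmod Rc mul one act C \<and>
     (\<exists>(n::nat) \<pi>. rhom Rc (free_act mul {..<n}) (free_mod Rc {..<n}) act C \<pi> \<and>
        \<pi> ` free_mod Rc {..<n} = C \<and>
        fgen Rc (free_act mul {..<n}) (kernel (free_mod Rc {..<n}) \<pi>))"

definition right_ideal :: "'r::ab_group_add set \<Rightarrow> ('r \<Rightarrow> 'r \<Rightarrow> 'r) \<Rightarrow> 'r \<Rightarrow> 'r set \<Rightarrow> bool" where
  "right_ideal Rc mul one I \<longleftrightarrow> I \<subseteq> Rc \<and> rmod Rc mul one mul I"

definition right_semihereditary :: "'r::ab_group_add set \<Rightarrow> ('r \<Rightarrow> 'r \<Rightarrow> 'r) \<Rightarrow> 'r \<Rightarrow> bool" where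
  "right_semihereditary Rc mul one \<longleftrightarrow>
     (\<forall>I. right_ideal Rc mul one I \<and> fgen Rc mul I \<longrightarrow> projective Rc mul one mul I)"

definition right_coherent :: "'r::ab_group_add set \<Rightarrow> ('r \<Rightarrow> 'r \<Rightarrow> 'r) \<Rightarrow> 'r \<Rightarrow> bool" where
  "right_coherent Rc mul one \<longleftrightarrow>
     (\<forall>I. right_ideal Rc mul one I \<and> fgen Rc mul I \<longrightarrow> fin_pres Rc mul one mul I)"

definition fin_M_gen :: "'r set \<Rightarrow> ('a::ab_group_add \<Rightarrow> 'r \<Rightarrow> 'a) \<Rightarrow> 'a set
    \<Rightarrow> ('b::ab_group_add \<Rightarrow> 'r \<Rightarrow> 'b) \<Rightarrow> 'b set \<Rightarrow> bool" where
  "fin_M_gen Rc actM M actN N \<longleftrightarrow>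
     (\<exists>n>0. \<exists>\<sigma>. rhom Rc (dact actM) (dsum n M) actN N \<sigma> \<and> \<sigma> ` dsum n M = N)"

definition M_coherent :: "'r set \<Rightarrow> ('a::ab_group_add \<Rightarrow> 'r \<Rightarrow> 'a) \<Rightarrow> 'a set
    \<Rightarrow> ('b::ab_group_add \<Rightarrow> 'r \<Rightarrow> 'b) \<Rightarrow> 'b set \<Rightarrow> bool" where
  "M_coherent Rc actM M actN N \<longleftrightarrow> fin_M_gen Rc actM M actN N \<and>
     (\<forall>n>0. \<forall>\<rho>. rhom Rc (dact actM) (dsum n M) actN N \<rho> \<longrightarrow>
        fin_M_gen Rc actM M (dact actM) (kernel (dsum n M) \<rho>))"

end

theory Submission
  imports Defs
begin



lemma sum_fun_apply: "(sum f A) x = sum (\<lambda>i. f i x) A"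
  by (induction A rule: infinite_finite_induct) auto

lemma rmod_minus: "rmod Rc mul one act C \<Longrightarrow> x\<in>C \<Longrightarrow> y\<in>C \<Longrightarrow> x - y \<in> C"
  unfolding rmod_def by (metis diff_conv_add_uminus)

lemma rmod_act0: "rmod Rc mul one act C \<Longrightarrow> r \<in> Rc \<Longrightarrow> act 0 r = 0"
proof -
  assume a: "rmod Rc mul one act C" "r \<in> Rc"
  then have "act (0+0) r = act 0 r + act 0 r" unfolding rmod_def by blast
  then show ?thesis by simp
qed

lemma rmod_act_minus: "rmod Rc mul one act C \<Longrightarrow> x\<in>C \<Longrightarrow> y\<in>C \<Longrightarrow> r \<in> Rc
   \<Longrightarrow> act (x - y) r = act x r - act y r"
proof -
  assume a: "rmod Rc mul one act C" "x\<in>C" "y\<in>C" "r \<in> Rc"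
  then have "x - y \<in> C" using rmod_minus by blast
  with a have "act ((x - y) + y) r = act (x - y) r + act y r" unfolding rmod_def by blast
  then show ?thesis by (simp add: algebra_simps)
qed

lemma rmod_sum: "rmod Rc mul one act C \<Longrightarrow> (\<And>i. i\<in>A \<Longrightarrow> g i \<in> C) \<Longrightarrow> sum g A \<in> C"
  by (induction A rule: infinite_finite_induct) (auto simp: rmod_def)

lemma rmod_act_sum: "rmod Rc mul one act C \<Longrightarrow> (\<And>i. i\<in>A \<Longrightarrow> g i \<in> C) \<Longrightarrow> r \<in> Rc
   \<Longrightarrow> act (sum g A) r = sum (\<lambda>i. act (g i) r) A"
proof (induction A rule: infinite_finite_induct)
  case (infinite A) then show ?case by (simp add: rmod_act0)
next
  case empty then show ?case by (simp add: rmod_act0)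
next
  case (insert x F)
  then have "sum g F \<in> C" by (intro rmod_sum[of Rc mul one act]) auto
  with insert show ?case unfolding rmod_def by simp
qed

lemma rhom_zero: "rmod Rc mul one act1 C1 \<Longrightarrow> rhom Rc act1 C1 act2 C2 f \<Longrightarrow> f 0 = 0"
proof -
  assume a: "rmod Rc mul one act1 C1" "rhom Rc act1 C1 act2 C2 f"
  then have "f (0+0) = f 0 + f 0" unfolding rmod_def rhom_def by blast
  then show ?thesis by simp
qed

lemma rhom_minus: "rmod Rc mul one act1 C1 \<Longrightarrow> rhom Rc act1 C1 act2 C2 f \<Longrightarrow> x\<in>C1 \<Longrightarrow> y \<in> C1
  \<Longrightarrow> f (x - y) = f x - f y"
proof -
  assume a: "rmod Rc mul one act1 C1" "rhom Rc act1 C1 act2 C2 f" "x\<in>C1" "y \<in> C1"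
  then have "x - y \<in> C1" using rmod_minus by blast
  with a have "f ((x - y) + y) = f (x - y) + f y" unfolding rhom_def by blast
  then show ?thesis by (simp add: algebra_simps)
qed

lemma dsummand_proj:
  assumes m: "rmod Rc mul one act C" and d: "dsummand Rc mul one act C A"
  shows "\<exists>p. rhom Rc act C act C p \<and> (\<forall>v\<in>C. p v \<in> A) \<and> (\<forall>a\<in>A. p a = a)"
proof -
  from d obtain B where A: "submod Rc mul one act A C" and B: "submod Rc mul one act B C"
    and AB: "A \<inter> B = {0}" and C: "C = {a + b |a b. a \<in> A \<and> b \<in> B}"
    unfolding dsummand_def by blast
  have mA: "rmod Rc mul one act A" and sA: "A \<subseteq> C" using A unfolding submod_def by auto
  have mB: "rmod Rc mul one act B" and sB: "B \<subseteq> C" using B unfolding submod_def by auto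
  have uniq: "a = a'" if "a \<in> A" "a' \<in> A" "v - a \<in> B" "v - a' \<in> B" for v a a'
  proof -
    have "a - a' \<in> A" using rmod_minus[OF mA] that by blast
    moreover have "(v - a') - (v - a) \<in> B" using rmod_minus[OF mB] that by blast
    moreover have "(v - a') - (v - a) = a - a'" by simp
    ultimately have "a - a' \<in> A \<inter> B" by auto
    with AB show ?thesis by auto
  qed
  have ex: "\<exists>a. a \<in> A \<and> v - a \<in> B" if "v \<in> C" for v
  proof -
    from that C obtain a b where "a \<in> A" "b \<in> B" "v = a + b" by auto
    then show ?thesis by (intro exI[of _ a]) auto
  qed
  define p where "p v = (THE a. a \<in> A \<and> v - a \<in> B)" for v
  have p: "p v \<in> A \<and> v - p v \<in> B" if "v \<in> C" for v
  proof -
    have "\<exists>!a. a \<in> A \<and> v - a \<in> B" using ex[OF that] uniq by blast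
    then show ?thesis unfolding p_def by (rule theI')
  qed
  have pe: "p v = a" if "v \<in> C" "a \<in> A" "v - a \<in> B" for v a
    using uniq[OF p[OF that(1), THEN conjunct1] that(2) p[OF that(1), THEN conjunct2] that(3)] .
  have hom: "rhom Rc act C act C p"
    unfolding rhom_def
  proof (intro conjI ballI)
    fix x assume "x \<in> C" then show "p x \<in> C" using p sA by auto
  next
    fix x y assume xy: "x \<in> C" "y \<in> C"
    have "x + y \<in> C" using m xy unfolding rmod_def by blast
    moreover have "p x + p y \<in> A" using mA p xy unfolding rmod_def by blast
    moreover have "(x + y) - (p x + p y) = (x - p x) + (y - p y)" by simp
    then have "(x + y) - (p x + p y) \<in> B" using mB p xy unfolding rmod_def by metis
    ultimately show "p (x + y) = p x + p y" by (rule pe)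
  next
    fix x r assume xr: "x \<in> C" "r \<in> Rc"
    have "act x r \<in> C" using m xr unfolding rmod_def by blast
    moreover have "act (p x) r \<in> A" using mA p xr unfolding rmod_def by blast
    moreover have "act x r - act (p x) r = act (x - p x) r"
      using rmod_act_minus[OF m xr(1) _ xr(2), of "p x"] p[OF xr(1)] sA by auto
    then have "act x r - act (p x) r \<in> B" using mB p xr unfolding rmod_def by metis
    ultimately show "p (act x r) = act (p x) r" by (rule pe)
  qed
  have "\<forall>a\<in>A. p a = a"
  proof
    fix a assume "a \<in> A"
    moreover have "a - a \<in> B" using mB unfolding rmod_def by simp
    ultimately show "p a = a" using pe sA by blast
  qed
  with hom p show ?thesis by blast
qed

lemma rmod_dsum: assumes m: "rmod Rc mul one act C" shows "rmod Rc mul one (dact act) (dsum n C)"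
proof -
  have z: "act 0 r = 0" if "r \<in> Rc" for r using rmod_act0[OF m that] .
  have c: "x i \<in> C" if "x \<in> dsum n C" for x i
    using that m unfolding dsum_def rmod_def by (cases "i < n") auto
  show ?thesis unfolding rmod_def
  proof (intro conjI ballI)
    show "0 \<in> dsum n C" using m unfolding dsum_def rmod_def by auto
  next
    fix x y assume "x \<in> dsum n C" "y \<in> dsum n C"
    then show "x + y \<in> dsum n C" using m unfolding dsum_def rmod_def by auto
  next
    fix x assume "x \<in> dsum n C"
    then show "- x \<in> dsum n C" using m unfolding dsum_def rmod_def by auto
  next
    fix x r assume "x \<in> dsum n C" "r \<in> Rc"
    then show "dact act x r \<in> dsum n C" using m z unfolding dsum_def rmod_def dact_def by auto
  next
    fix x y r assume "x \<in> dsum n C" "y \<in> dsum n C" "r \<in> Rc"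
    then show "dact act (x + y) r = dact act x r + dact act y r"
      using m c unfolding rmod_def dact_def by (auto simp: fun_eq_iff)
  next
    fix x r s assume "x \<in> dsum n C" "r \<in> Rc" "s \<in> Rc"
    then show "dact act x (r + s) = dact act x r + dact act x s"
      using m c unfolding rmod_def dact_def by (auto simp: fun_eq_iff)
  next
    fix x r s assume "x \<in> dsum n C" "r \<in> Rc" "s \<in> Rc"
    then show "dact act x (mul r s) = dact act (dact act x r) s"
      using m c unfolding rmod_def dact_def by (auto simp: fun_eq_iff)
  next
    fix x assume "x \<in> dsum n C"
    then show "dact act x one = x"
      using m c unfolding rmod_def dact_def by (auto simp: fun_eq_iff)
  qed
qed




lemma hom_kernel_proj:
  fixes act :: "'m::ab_group_add \<Rightarrow> 'r::ring_1 \<Rightarrow> 'm"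
  assumes m: "rmod UNIV (*) 1 act M" and fsr: "fin_sigma_rickart UNIV (*) 1 act M"
    and h: "rhom UNIV (dact act) (dsum n M) act M h"
  shows "\<exists>p. rhom UNIV (dact act) (dsum n M) (dact act) (dsum n M) p
     \<and> (\<forall>v\<in>dsum n M. h (p v) = 0) \<and> (\<forall>v\<in>dsum n M. h v = 0 \<longrightarrow> p v = v)"
proof (cases "n = 0")
  case True
  have md: "rmod UNIV (*) 1 (dact act) (dsum n M)" by (rule rmod_dsum[OF m])
  have d0: "dsum n M = {0}" using True m unfolding dsum_def rmod_def by (auto simp: fun_eq_iff)
  have "h 0 = 0" by (rule rhom_zero[OF md h])
  moreover have "rhom UNIV (dact act) (dsum n M) (dact act) (dsum n M) id"
    using md unfolding rhom_def rmod_def by auto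
  ultimately show ?thesis using d0 by (intro exI[of _ id]) auto
next
  case False
  then have n: "n > 0" by simp
  have md: "rmod UNIV (*) 1 (dact act) (dsum n M)" by (rule rmod_dsum[OF m])
  have ric: "rickart UNIV (*) 1 (dact act) (dsum n M)" using fsr n unfolding fin_sigma_rickart_def by blast
  define \<Phi> :: "(nat \<Rightarrow> 'm) \<Rightarrow> nat \<Rightarrow> 'm" where "\<Phi> v = (if v \<in> dsum n M then (\<lambda>j. if j = 0 then h v else 0) else 0)" for v
  have z: "act 0 r = 0" for r using rmod_act0[OF m] by blast
  have hM: "h v \<in> M" if "v \<in> dsum n M" for v using h that unfolding rhom_def by blast
  have "\<Phi> \<in> endos UNIV (dact act) (dsum n M)"
    unfolding endos_def rhom_def mem_Collect_eq
  proof (intro conjI ballI allI impI)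
    fix x assume "x \<in> dsum n M"
    then show "\<Phi> x \<in> dsum n M" using hM n m unfolding \<Phi>_def dsum_def rmod_def by auto
  next
    fix x y assume xy: "x \<in> dsum n M" "y \<in> dsum n M"
    then have "x + y \<in> dsum n M" using md unfolding rmod_def by blast
    then show "\<Phi> (x + y) = \<Phi> x + \<Phi> y" using xy h unfolding \<Phi>_def rhom_def by (auto simp: fun_eq_iff)
  next
    fix x r assume xr: "x \<in> dsum n M" 
    then have "dact act x r \<in> dsum n M" using md unfolding rmod_def by blast
    then show "\<Phi> (dact act x r) = dact act (\<Phi> x) r"
      using xr h z unfolding \<Phi>_def rhom_def dact_def by (auto simp: fun_eq_iff)
  next
    fix x assume "x \<notin> dsum n M" then show "\<Phi> x = 0" unfolding \<Phi>_def by simp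
  qed
  then have ds: "dsummand UNIV (*) 1 (dact act) (dsum n M) (kernel (dsum n M) \<Phi>)"
    using ric unfolding rickart_def by blast
  have ker: "kernel (dsum n M) \<Phi> = kernel (dsum n M) h"
    unfolding kernel_def \<Phi>_def by (auto simp: fun_eq_iff)
  obtain p where p: "rhom UNIV (dact act) (dsum n M) (dact act) (dsum n M) p"
    "\<forall>v\<in>dsum n M. p v \<in> kernel (dsum n M) h" "\<forall>a\<in>kernel (dsum n M) h. p a = a"
    using dsummand_proj[OF md ds] ker by auto
  then show ?thesis unfolding kernel_def by (intro exI[of _ p]) auto
qed




lemma part3:
  fixes act :: "'m::ab_group_add \<Rightarrow> 'r::ring_1 \<Rightarrow> 'm"
  assumes m: "rmod UNIV (*) 1 act M" and fsr: "fin_sigma_rickart UNIV (*) 1 act M"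
  shows "\<forall>N. submod UNIV (*) 1 act N M \<and> fin_M_gen UNIV act M act N
              \<longrightarrow> M_coherent UNIV act M act N"
proof (intro allI impI)
  fix N assume a: "submod UNIV (*) 1 act N M \<and> fin_M_gen UNIV act M act N"
  have NM: "N \<subseteq> M" using a unfolding submod_def by blast
  show "M_coherent UNIV act M act N" unfolding M_coherent_def
  proof (intro conjI allI impI)
    show "fin_M_gen UNIV act M act N" using a by blast
  next
    fix n :: nat and \<rho> assume n: "n > 0" and r: "rhom UNIV (dact act) (dsum n M) act N \<rho>"
    have r': "rhom UNIV (dact act) (dsum n M) act M \<rho>" using r NM unfolding rhom_def by blast
    obtain p where p: "rhom UNIV (dact act) (dsum n M) (dact act) (dsum n M) p"
      "\<forall>v\<in>dsum n M. \<rho> (p v) = 0" "\<forall>v\<in>dsum n M. \<rho> v = 0 \<longrightarrow> p v = v"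
      using hom_kernel_proj[OF m fsr r'] by blast
    have "rhom UNIV (dact act) (dsum n M) (dact act) (kernel (dsum n M) \<rho>) p"
      using p unfolding rhom_def kernel_def by auto
    moreover have "p ` dsum n M = kernel (dsum n M) \<rho>"
    proof
      show "p ` dsum n M \<subseteq> kernel (dsum n M) \<rho>" using p unfolding rhom_def kernel_def by auto
      show "kernel (dsum n M) \<rho> \<subseteq> p ` dsum n M"
      proof
        fix k assume "k \<in> kernel (dsum n M) \<rho>"
        then have "k \<in> dsum n M" "p k = k" using p unfolding kernel_def by auto
        then show "k \<in> p ` dsum n M" by (metis imageI)
      qed
    qed
    ultimately show "fin_M_gen UNIV act M (dact act) (kernel (dsum n M) \<rho>)"
      unfolding fin_M_gen_def using n by blast
  qed
qed




locale msetting =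
  fixes act :: "'m::ab_group_add \<Rightarrow> 'r::ring_1 \<Rightarrow> 'm" and M :: "'m set"
  assumes rm: "rmod UNIV (*) 1 act M"
begin

abbreviation "S \<equiv> endos UNIV act M"

lemma M0: "0 \<in> M" using rm unfolding rmod_def by blast
lemma Madd: "x \<in> M \<Longrightarrow> y \<in> M \<Longrightarrow> x + y \<in> M" using rm unfolding rmod_def by blast
lemma Mdiff: "x \<in> M \<Longrightarrow> y \<in> M \<Longrightarrow> x - y \<in> M" using rm rmod_minus by blast
lemma Mact: "x \<in> M \<Longrightarrow> act x r \<in> M" using rm unfolding rmod_def by blast
lemma Msum: "(\<And>i. i \<in> A \<Longrightarrow> g i \<in> M) \<Longrightarrow> sum g A \<in> M" using rmod_sum[OF rm] by blast
lemma act0: "act 0 r = 0" using rmod_act0[OF rm] by blast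
lemma act_add: "x \<in> M \<Longrightarrow> y \<in> M \<Longrightarrow> act (x + y) r = act x r + act y r"
  using rm unfolding rmod_def by blast
lemma act_sum: "(\<And>i. i \<in> A \<Longrightarrow> g i \<in> M) \<Longrightarrow> act (sum g A) r = sum (\<lambda>i. act (g i) r) A"
  using rmod_act_sum[OF rm] by blast

lemma endo_in: "f \<in> S \<Longrightarrow> f x \<in> M"
  unfolding endos_def rhom_def using M0 by (cases "x \<in> M") auto
lemma endo_out: "f \<in> S \<Longrightarrow> x \<notin> M \<Longrightarrow> f x = 0"
  unfolding endos_def by blast
lemma endo_add: "f \<in> S \<Longrightarrow> x \<in> M \<Longrightarrow> y \<in> M \<Longrightarrow> f (x + y) = f x + f y"
  unfolding endos_def rhom_def by blast
lemma endo_act: "f \<in> S \<Longrightarrow> x \<in> M \<Longrightarrow> f (act x r) = act (f x) r"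
  unfolding endos_def rhom_def by blast
lemma endo_0: "f \<in> S \<Longrightarrow> f 0 = 0"
  using rhom_zero[OF rm] unfolding endos_def by blast
lemma endo_diff: "f \<in> S \<Longrightarrow> x \<in> M \<Longrightarrow> y \<in> M \<Longrightarrow> f (x - y) = f x - f y"
  using rhom_minus[OF rm] unfolding endos_def by blast
lemma endo_sum: "f \<in> S \<Longrightarrow> (\<And>i. i \<in> A \<Longrightarrow> g i \<in> M) \<Longrightarrow> f (sum g A) = sum (\<lambda>i. f (g i)) A"
proof (induction A rule: infinite_finite_induct)
  case (insert x F)
  then have "sum g F \<in> M" by (intro Msum) auto
  with insert show ?case by (simp add: endo_add)
qed (auto simp: endo_0)

lemma S_zero: "(0::'m\<Rightarrow>'m) \<in> S"
  unfolding endos_def rhom_def by (auto simp: M0 act0)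
lemma S_add: "f \<in> S \<Longrightarrow> g \<in> S \<Longrightarrow> f + g \<in> S"
  unfolding endos_def rhom_def by (auto simp: Madd act_add algebra_simps)
lemma S_diff: "f \<in> S \<Longrightarrow> g \<in> S \<Longrightarrow> f - g \<in> S"
proof -
  assume a: "f \<in> S" "g \<in> S"
  show ?thesis unfolding endos_def rhom_def mem_Collect_eq
  proof (intro conjI ballI allI impI)
    fix x assume "x \<in> M" then show "(f - g) x \<in> M" using a by (simp add: Mdiff endo_in)
  next
    fix x y assume "x \<in> M" "y \<in> M" then show "(f - g) (x + y) = (f - g) x + (f - g) y"
      using a by (simp add: endo_add)
  next
    fix x r assume "x \<in> M" then show "(f - g) (act x r) = act ((f - g) x) r"
      using a by (simp add: endo_act rmod_act_minus[OF rm] endo_in)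
  next
    fix x assume "x \<notin> M" then show "(f - g) x = 0" using a by (simp add: endo_out)
  qed
qed
lemma S_comp: "f \<in> S \<Longrightarrow> g \<in> S \<Longrightarrow> f \<circ> g \<in> S"
proof -
  assume a: "f \<in> S" "g \<in> S"
  have "f 0 = 0" using a endo_0 by blast
  with a show ?thesis unfolding endos_def[of UNIV act M] mem_Collect_eq rhom_def
    by auto
qed
lemma S_one: "end_one M \<in> S"
  unfolding endos_def rhom_def end_one_def by (auto simp: Madd Mact)
lemma S_sum: "(\<And>i. i \<in> A \<Longrightarrow> g i \<in> S) \<Longrightarrow> sum g A \<in> S"
  by (induction A rule: infinite_finite_induct) (auto simp: S_zero S_add)

lemma comp_add_right: "f \<in> S \<Longrightarrow> g \<in> S \<Longrightarrow> h \<in> S \<Longrightarrow> f \<circ> (g + h) = (f \<circ> g) + (f \<circ> h)"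
  by (auto simp: fun_eq_iff endo_add endo_in)
lemma comp_diff_right: "f \<in> S \<Longrightarrow> g \<in> S \<Longrightarrow> h \<in> S \<Longrightarrow> f \<circ> (g - h) = (f \<circ> g) - (f \<circ> h)"
  by (auto simp: fun_eq_iff endo_diff endo_in)
lemma comp_zero_right: "f \<in> S \<Longrightarrow> f \<circ> 0 = 0"
  by (auto simp: fun_eq_iff endo_0)
lemma comp_zero_left: "0 \<circ> f = 0"
  by (auto simp: fun_eq_iff)
lemma comp_sum_right: "f \<in> S \<Longrightarrow> (\<And>i. i \<in> A \<Longrightarrow> g i \<in> S) \<Longrightarrow> f \<circ> sum g A = sum (\<lambda>i. f \<circ> g i) A"
  by (auto simp: fun_eq_iff sum_fun_apply endo_sum endo_in)
lemma comp_sum_left: "sum g A \<circ> h = sum (\<lambda>i. g i \<circ> h) A"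
  by (auto simp: fun_eq_iff sum_fun_apply)
lemma end_one_left: "f \<in> S \<Longrightarrow> end_one M \<circ> f = f"
  by (auto simp: fun_eq_iff end_one_def endo_in)
lemma end_one_right: "f \<in> S \<Longrightarrow> f \<circ> end_one M = f"
  by (auto simp: fun_eq_iff end_one_def endo_out endo_0)

end




locale lsetting = msetting act M for act :: "'m::ab_group_add \<Rightarrow> 'r::ring_1 \<Rightarrow> 'm" and M +
  fixes xs :: "('m \<Rightarrow> 'm) list"
  assumes xsS: "set xs \<subseteq> endos UNIV act M"
    and fsr: "fin_sigma_rickart UNIV (*) 1 act M"
begin

abbreviation "n \<equiv> length xs"
definition "V = free_mod S {..<n}"
definition fa :: "(nat \<Rightarrow> 'm \<Rightarrow> 'm) \<Rightarrow> ('m \<Rightarrow> 'm) \<Rightarrow> nat \<Rightarrow> 'm \<Rightarrow> 'm" where "fa = free_act (\<lambda>f g. f \<circ> g) {..<n}"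
definition "F w = (\<Sum>i<n. (xs ! i) (w i))"
definition "pi0 v = (\<Sum>i<n. (xs ! i) \<circ> v i)"
definition "vec v x = (\<lambda>j. v j x)"

lemma xsi: "xs ! i \<in> S" if "i < n" using xsS that by auto

lemma md: "rmod UNIV (*) 1 (dact act) (dsum n M)" by (rule rmod_dsum[OF rm])

lemma dsum_comp: "w \<in> dsum n M \<Longrightarrow> w i \<in> M"
  unfolding dsum_def using M0 by (cases "i < n") auto
lemma dsum_big: "w \<in> dsum n M \<Longrightarrow> i \<ge> n \<Longrightarrow> w i = 0"
  unfolding dsum_def by auto

lemma F_hom: "rhom UNIV (dact act) (dsum n M) act M F"
  unfolding rhom_def
proof (intro conjI ballI)
  fix x assume "x \<in> dsum n M" then show "F x \<in> M"
    unfolding F_def by (intro Msum endo_in xsi) auto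
next
  fix x y assume "x \<in> dsum n M" "y \<in> dsum n M" then show "F (x + y) = F x + F y"
    unfolding F_def by (simp add: endo_add xsi dsum_comp sum.distrib)
next
  fix x r assume x: "x \<in> dsum n M"
  have "act (F x) r = (\<Sum>i<n. act ((xs ! i) (x i)) r)"
    unfolding F_def by (rule act_sum) (simp add: endo_in xsi)
  then show "F (dact act x r) = act (F x) r"
    unfolding F_def dact_def using x by (simp add: endo_act xsi dsum_comp)
qed

definition "pp = (SOME p. rhom UNIV (dact act) (dsum n M) (dact act) (dsum n M) p
     \<and> (\<forall>v\<in>dsum n M. F (p v) = 0) \<and> (\<forall>v\<in>dsum n M. F v = 0 \<longrightarrow> p v = v))"

lemma pp: "rhom UNIV (dact act) (dsum n M) (dact act) (dsum n M) pp"
     "\<forall>v\<in>dsum n M. F (pp v) = 0" "\<forall>v\<in>dsum n M. F v = 0 \<longrightarrow> pp v = v"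
proof -
  have "\<exists>p. rhom UNIV (dact act) (dsum n M) (dact act) (dsum n M) p
     \<and> (\<forall>v\<in>dsum n M. F (p v) = 0) \<and> (\<forall>v\<in>dsum n M. F v = 0 \<longrightarrow> p v = v)"
    by (rule hom_kernel_proj[OF rm fsr F_hom])
  then have "rhom UNIV (dact act) (dsum n M) (dact act) (dsum n M) pp
     \<and> (\<forall>v\<in>dsum n M. F (pp v) = 0) \<and> (\<forall>v\<in>dsum n M. F v = 0 \<longrightarrow> pp v = v)"
    unfolding pp_def by (rule someI_ex)
  then show "rhom UNIV (dact act) (dsum n M) (dact act) (dsum n M) pp"
     "\<forall>v\<in>dsum n M. F (pp v) = 0" "\<forall>v\<in>dsum n M. F v = 0 \<longrightarrow> pp v = v" by auto
qed

definition "e w = w - pp w"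

lemma pp_in: "w \<in> dsum n M \<Longrightarrow> pp w \<in> dsum n M" using pp(1) unfolding rhom_def by blast

lemma e_in: "w \<in> dsum n M \<Longrightarrow> e w \<in> dsum n M"
  unfolding e_def using rmod_minus[OF md] pp_in by blast

lemma dsum_add: "w \<in> dsum n M \<Longrightarrow> u \<in> dsum n M \<Longrightarrow> w + u \<in> dsum n M"
  using md unfolding rmod_def by blast
lemma dsum_act: "w \<in> dsum n M \<Longrightarrow> dact act w r \<in> dsum n M"
  using md unfolding rmod_def by blast

lemma e_add: "w \<in> dsum n M \<Longrightarrow> u \<in> dsum n M \<Longrightarrow> e (w + u) = e w + e u"
  unfolding e_def using pp(1) unfolding rhom_def by (simp add: algebra_simps)

lemma e_act: "w \<in> dsum n M \<Longrightarrow> e (dact act w r) = dact act (e w) r"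
proof -
  assume w: "w \<in> dsum n M"
  have "pp (dact act w r) = dact act (pp w) r" using pp(1) w unfolding rhom_def by blast
  then show ?thesis unfolding e_def using rmod_act_minus[OF md w pp_in[OF w]] by simp
qed

lemma F_e: "w \<in> dsum n M \<Longrightarrow> F (e w) = F w"
  unfolding e_def using rhom_minus[OF md F_hom _ pp_in] pp(2) by simp

lemma e_ker: "w \<in> dsum n M \<Longrightarrow> F w = 0 \<Longrightarrow> e w = 0"
  unfolding e_def using pp(3) by simp

lemma V_iff: "v \<in> V \<longleftrightarrow> (\<forall>j. v j \<in> S) \<and> (\<forall>j\<ge>n. v j = 0)"
proof
  assume "v \<in> V" then show "(\<forall>j. v j \<in> S) \<and> (\<forall>j\<ge>n. v j = 0)"
  proof (intro conjI allI impI)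
    assume v: "v \<in> V"
    fix j show "v j \<in> S" using v S_zero unfolding V_def free_mod_def by (cases "j < n") auto
  next
    assume v: "v \<in> V"
    fix j :: nat assume "j \<ge> n" then show "v j = 0" using v unfolding V_def free_mod_def by auto
  qed
next
  assume a: "(\<forall>j. v j \<in> S) \<and> (\<forall>j\<ge>n. v j = 0)"
  then have "{i. v i \<noteq> 0} \<subseteq> {..<n}" by (auto simp: not_le[symmetric])
  then have "finite {i. v i \<noteq> 0}" using finite_subset by blast
  with a show "v \<in> V" unfolding V_def free_mod_def by auto
qed

lemma vec_in: "v \<in> V \<Longrightarrow> vec v x \<in> dsum n M"
  unfolding vec_def dsum_def V_iff by (auto simp: endo_in)

lemma vec_add: "v \<in> V \<Longrightarrow> x \<in> M \<Longrightarrow> y \<in> M \<Longrightarrow> vec v (x + y) = vec v x + vec v y"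
  unfolding vec_def V_iff by (auto simp: fun_eq_iff endo_add)

lemma vec_act: "v \<in> V \<Longrightarrow> x \<in> M \<Longrightarrow> vec v (act x r) = dact act (vec v x) r"
  unfolding vec_def V_iff dact_def by (auto simp: fun_eq_iff endo_act)

definition "Q v = (\<lambda>i x. if x \<in> M then e (vec v x) i else 0)"

lemma Q_S: "v \<in> V \<Longrightarrow> Q v i \<in> S"
  unfolding endos_def rhom_def mem_Collect_eq
proof (intro conjI ballI allI impI)
  fix x assume "v \<in> V" "x \<in> M" then show "Q v i x \<in> M"
    unfolding Q_def using dsum_comp e_in vec_in by simp
next
  fix x y assume "v \<in> V" "x \<in> M" "y \<in> M" then show "Q v i (x + y) = Q v i x + Q v i y"
    unfolding Q_def by (simp add: Madd vec_add e_add vec_in)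
next
  fix x r assume a: "v \<in> V" "x \<in> M"
  then have "e (vec v (act x r)) = dact act (e (vec v x)) r" by (simp add: vec_act e_act vec_in)
  then show "Q v i (act x r) = act (Q v i x) r"
    unfolding Q_def using a by (simp add: Mact dact_def)
next
  fix x assume "x \<notin> M" then show "Q v i x = 0" unfolding Q_def by simp
qed

lemma Q_big: "v \<in> V \<Longrightarrow> i \<ge> n \<Longrightarrow> Q v i = 0"
  unfolding Q_def using dsum_big e_in vec_in by (simp add: fun_eq_iff)

lemma Q_V: "v \<in> V \<Longrightarrow> Q v \<in> V"
  unfolding V_iff[of "Q v"] using Q_S Q_big by blast

lemma V_zero: "0 \<in> V" unfolding V_iff using S_zero by simp
lemma V_add: "v \<in> V \<Longrightarrow> w \<in> V \<Longrightarrow> v + w \<in> V" unfolding V_iff using S_add by simp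
lemma V_diff: "v \<in> V \<Longrightarrow> w \<in> V \<Longrightarrow> v - w \<in> V" unfolding V_iff using S_diff by simp
lemma fa_apply: "fa v r i = (if i < n then v i \<circ> r else 0)"
  unfolding fa_def free_act_def by simp
lemma V_fa: "v \<in> V \<Longrightarrow> r \<in> S \<Longrightarrow> fa v r \<in> V"
  unfolding V_iff fa_apply using S_comp S_zero by simp
lemma V_sum: "(\<And>j. j \<in> A \<Longrightarrow> w j \<in> V) \<Longrightarrow> sum w A \<in> V"
  by (induction A rule: infinite_finite_induct) (auto simp: V_zero V_add)

lemma pi0_apply: "pi0 v x = F (vec v x)"
  unfolding pi0_def F_def vec_def by (simp add: sum_fun_apply)
lemma pi0_S: "v \<in> V \<Longrightarrow> pi0 v \<in> S"
  unfolding pi0_def V_iff by (auto intro!: S_sum S_comp xsi)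
lemma pi0_add: "v \<in> V \<Longrightarrow> w \<in> V \<Longrightarrow> pi0 (v + w) = pi0 v + pi0 w"
  unfolding pi0_def V_iff by (simp add: comp_add_right xsi sum.distrib)
lemma pi0_diff: "v \<in> V \<Longrightarrow> w \<in> V \<Longrightarrow> pi0 (v - w) = pi0 v - pi0 w"
  unfolding pi0_def V_iff by (simp add: comp_diff_right xsi sum_subtractf)
lemma pi0_fa: "v \<in> V \<Longrightarrow> r \<in> S \<Longrightarrow> pi0 (fa v r) = pi0 v \<circ> r"
  unfolding pi0_def comp_sum_left by (simp add: fa_apply comp_assoc)
lemma pi0_zero: "pi0 0 = 0"
  unfolding pi0_def by (simp add: comp_zero_right xsi)
lemma pi0_sum: "(\<And>j. j \<in> A \<Longrightarrow> w j \<in> V) \<Longrightarrow> pi0 (sum w A) = sum (\<lambda>j. pi0 (w j)) A"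
  by (induction A rule: infinite_finite_induct) (auto simp: pi0_zero pi0_add V_sum)

lemma F_zero: "F 0 = 0" unfolding F_def by (simp add: endo_0 xsi)
lemma e_zero: "e 0 = 0"
proof -
  have "(0::nat\<Rightarrow>'m) \<in> dsum n M" using md unfolding rmod_def by blast
  then show ?thesis using e_ker F_zero by blast
qed
lemma vec_out: "v \<in> V \<Longrightarrow> x \<notin> M \<Longrightarrow> vec v x = 0"
  unfolding vec_def V_iff by (auto simp: fun_eq_iff endo_out)
lemma vec_0: "v \<in> V \<Longrightarrow> vec v 0 = 0"
  unfolding vec_def V_iff by (auto simp: fun_eq_iff endo_0)

lemma vec_Q: "v \<in> V \<Longrightarrow> x \<in> M \<Longrightarrow> vec (Q v) x = e (vec v x)"
  unfolding Q_def vec_def by (simp add: fun_eq_iff)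

lemma pi0_Q: "v \<in> V \<Longrightarrow> pi0 (Q v) = pi0 v"
proof (rule ext)
  fix x assume v: "v \<in> V"
  show "pi0 (Q v) x = pi0 v x"
  proof (cases "x \<in> M")
    case True then show ?thesis unfolding pi0_apply using v by (simp add: vec_Q F_e vec_in)
  next
    case False then show ?thesis unfolding pi0_apply using v Q_V by (simp add: vec_out)
  qed
qed

lemma Q_ker: "v \<in> V \<Longrightarrow> pi0 v = 0 \<Longrightarrow> Q v = 0"
proof -
  assume v: "v \<in> V" "pi0 v = 0"
  have "F (vec v x) = 0" for x using v(2) pi0_apply[of v x] by simp
  then show ?thesis unfolding Q_def using v e_ker vec_in by (auto simp: fun_eq_iff)
qed

lemma Q_zero: "Q 0 = 0" using Q_ker V_zero pi0_zero by blast

lemma vec_plus: "vec (v + w) x = vec v x + vec w x" unfolding vec_def by (simp add: fun_eq_iff)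

lemma Q_add: "v \<in> V \<Longrightarrow> w \<in> V \<Longrightarrow> Q (v + w) = Q v + Q w"
  unfolding Q_def by (auto simp: fun_eq_iff vec_plus e_add vec_in)

lemma Q_diff: "v \<in> V \<Longrightarrow> w \<in> V \<Longrightarrow> Q (v - w) = Q v - Q w"
proof -
  assume a: "v \<in> V" "w \<in> V"
  then have "Q ((v - w) + w) = Q (v - w) + Q w" using V_diff Q_add by blast
  then show ?thesis by simp
qed

lemma Q_eq: "v \<in> V \<Longrightarrow> w \<in> V \<Longrightarrow> pi0 v = pi0 w \<Longrightarrow> Q v = Q w"
proof -
  assume a: "v \<in> V" "w \<in> V" "pi0 v = pi0 w"
  then have "Q (v - w) = 0" using Q_ker V_diff pi0_diff by simp
  then show ?thesis using Q_diff a by simp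
qed

lemma Q_sum: "(\<And>j. j \<in> A \<Longrightarrow> w j \<in> V) \<Longrightarrow> Q (sum w A) = sum (\<lambda>j. Q (w j)) A"
  by (induction A rule: infinite_finite_induct) (auto simp: Q_zero Q_add V_sum)

lemma vec_fa: "v \<in> V \<Longrightarrow> vec (fa v r) x = vec v (r x)"
  unfolding vec_def V_iff fa_apply by (auto simp: fun_eq_iff)

lemma Q_fa: "v \<in> V \<Longrightarrow> r \<in> S \<Longrightarrow> Q (fa v r) = fa (Q v) r"
proof (intro ext)
  fix i x assume v: "v \<in> V" and r: "r \<in> S"
  show "Q (fa v r) i x = fa (Q v) r i x"
  proof (cases "i < n")
    case True
    show ?thesis
    proof (cases "x \<in> M")
      case xM: True
      have "Q (fa v r) i x = e (vec v (r x)) i" using xM v by (simp add: Q_def vec_fa)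
      then show ?thesis using True v r xM unfolding fa_apply by (simp add: Q_def endo_in)
    next
      case False
      then have "r x = 0" using r endo_out by blast
      then show ?thesis using True v r False M0 unfolding Q_def fa_apply by (simp add: vec_0 e_zero)
    qed
  next
    case False
    then show ?thesis using v r Q_big V_fa unfolding fa_apply by simp
  qed
qed

end




locale isetting = lsetting act M xs for act :: "'m::ab_group_add \<Rightarrow> 'r::ring_1 \<Rightarrow> 'm" and M xs +
  fixes I :: "('m \<Rightarrow> 'm) set"
  assumes RI: "right_ideal S (\<lambda>f g. f \<circ> g) (end_one M) I"
    and xsI: "set xs \<subseteq> I"
    and Ieq: "I = {\<Sum>i<length xs. xs ! i \<circ> rs i |rs. \<forall>i<length xs. rs i \<in> S}"
begin

lemma mI: "rmod S (\<lambda>f g. f \<circ> g) (end_one M) (\<lambda>f g. f \<circ> g) I" using RI unfolding right_ideal_def by blast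
lemma IS: "I \<subseteq> S" using RI unfolding right_ideal_def by blast
lemma I_add: "g \<in> I \<Longrightarrow> h \<in> I \<Longrightarrow> g + h \<in> I" using mI unfolding rmod_def by blast
lemma I_comp: "g \<in> I \<Longrightarrow> r \<in> S \<Longrightarrow> g \<circ> r \<in> I" using mI unfolding rmod_def by blast

lemma pi0_I: "v \<in> V \<Longrightarrow> pi0 v \<in> I"
  unfolding Ieq pi0_def V_iff by blast

lemma pre: "g \<in> I \<Longrightarrow> \<exists>v\<in>V. pi0 v = g"
proof -
  assume "g \<in> I"
  then obtain rs where rs: "\<forall>i<n. rs i \<in> S" "g = (\<Sum>i<n. xs ! i \<circ> rs i)" unfolding Ieq by blast
  define v where "v i = (if i < n then rs i else 0)" for i
  have "v \<in> V" unfolding V_iff v_def using rs S_zero by auto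
  moreover have "pi0 v = g" unfolding pi0_def v_def rs(2) by (rule sum.cong) auto
  ultimately show ?thesis by blast
qed

definition "sel g = (SOME v. v \<in> V \<and> pi0 v = g)"
lemma sel: "g \<in> I \<Longrightarrow> sel g \<in> V \<and> pi0 (sel g) = g"
  unfolding sel_def using pre by (metis (mono_tags, lifting) someI_ex)

lemma pi0_rhom: "rhom S fa V (\<lambda>f g. f \<circ> g) I pi0"
  unfolding rhom_def using pi0_I pi0_add pi0_fa by auto

lemma pi0_img: "pi0 ` V = I"
  using pi0_I pre by blast

definition "\<delta> j = (\<lambda>i. if i = j then end_one M else 0)"
definition "ks = map (\<lambda>j. \<delta> j - Q (\<delta> j)) [0..<n]"

lemma \<delta>_V: "\<delta> j \<in> V" if "j < n"
  unfolding V_iff \<delta>_def using that S_one S_zero by auto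

lemma fa_diff: "fa (v - w) r = fa v r - fa w r"
proof (rule ext)
  fix i show "fa (v - w) r i = (fa v r - fa w r) i"
  proof (cases "i < n")
    case True then show ?thesis unfolding fa_apply by (auto simp: fun_eq_iff)
  next
    case False
    with False show ?thesis unfolding fa_apply by simp
  qed
qed

lemma sum_delta_fa: "u \<in> V \<Longrightarrow> (\<Sum>i<n. fa (\<delta> i) (u i)) = u"
proof (rule ext)
  fix j assume u: "u \<in> V"
  show "(\<Sum>i<n. fa (\<delta> i) (u i)) j = u j"
  proof (cases "j < n")
    case True
    have "(\<Sum>i<n. fa (\<delta> i) (u i)) j = (\<Sum>i<n. fa (\<delta> i) (u i) j)" by (rule sum_fun_apply)
    also have "\<dots> = (\<Sum>i<n. if i = j then end_one M \<circ> u i else 0)"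
      using True by (intro sum.cong) (auto simp: fa_apply \<delta>_def comp_zero_left)
    also have "\<dots> = end_one M \<circ> u j" using True by simp
    also have "\<dots> = u j" using u V_iff end_one_left by blast
    finally show ?thesis .
  next
    case False
    then show ?thesis using u unfolding sum_fun_apply V_iff by (simp add: fa_apply zero_fun_def)
  qed
qed

lemma ks_k: "ks ! i \<in> V \<and> pi0 (ks ! i) = 0" if "i < n" for i
  unfolding ks_def using that \<delta>_V Q_V V_diff pi0_diff pi0_Q by auto

lemma ker_eq: "kernel V pi0 = {\<Sum>i<length ks. fa (ks ! i) (rs i) |rs. \<forall>i<length ks. rs i \<in> S}"
proof
  show "kernel V pi0 \<subseteq> {\<Sum>i<length ks. fa (ks ! i) (rs i) |rs. \<forall>i<length ks. rs i \<in> S}"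
  proof
    fix u assume "u \<in> kernel V pi0"
    then have u: "u \<in> V" "pi0 u = 0" unfolding kernel_def by auto
    have a: "fa (\<delta> i) (u i) \<in> V" if "i < n" for i using V_fa \<delta>_V u that V_iff by blast
    have "(\<Sum>i<length ks. fa (ks ! i) (u i)) = (\<Sum>i<n. fa (\<delta> i) (u i) - Q (fa (\<delta> i) (u i)))"
      unfolding ks_def by (intro sum.cong) (auto simp: fa_diff Q_fa \<delta>_V u(1)[unfolded V_iff])
    also have "\<dots> = (\<Sum>i<n. fa (\<delta> i) (u i)) - Q (\<Sum>i<n. fa (\<delta> i) (u i))"
      using Q_sum[of "{..<n}" "\<lambda>i. fa (\<delta> i) (u i)"] a by (simp add: sum_subtractf)
    also have "\<dots> = u" using sum_delta_fa[OF u(1)] Q_ker[OF u] by simp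
    finally have "u = (\<Sum>i<length ks. fa (ks ! i) (u i))" by simp
    moreover have "\<forall>i<length ks. u i \<in> S" using u V_iff by blast
    ultimately show "u \<in> {\<Sum>i<length ks. fa (ks ! i) (rs i) |rs. \<forall>i<length ks. rs i \<in> S}" by blast
  qed
next
  show "{\<Sum>i<length ks. fa (ks ! i) (rs i) |rs. \<forall>i<length ks. rs i \<in> S} \<subseteq> kernel V pi0"
  proof
    fix u assume "u \<in> {\<Sum>i<length ks. fa (ks ! i) (rs i) |rs. \<forall>i<length ks. rs i \<in> S}"
    then obtain rs where rs: "\<forall>i<n. rs i \<in> S" "u = (\<Sum>i<n. fa (ks ! i) (rs i))"
      unfolding ks_def by auto
    have k: "ks ! i \<in> V \<and> pi0 (ks ! i) = 0" if "i < n" for i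
      unfolding ks_def using that \<delta>_V Q_V V_diff pi0_diff pi0_Q by auto
    have b: "fa (ks ! i) (rs i) \<in> V \<and> pi0 (fa (ks ! i) (rs i)) = 0" if "i < n" for i
      using k[OF that] rs(1) that V_fa pi0_fa comp_zero_left by auto
    have "u \<in> V" unfolding rs(2) using b by (intro V_sum) auto
    moreover have "pi0 u = 0" unfolding rs(2) using b pi0_sum[of "{..<n}" "\<lambda>i. fa (ks ! i) (rs i)"] by simp
    ultimately show "u \<in> kernel V pi0" unfolding kernel_def by auto
  qed
qed

lemma fin_pres_I: "fin_pres S (\<lambda>f g. f \<circ> g) (end_one M) (\<lambda>f g. f \<circ> g) I"
  unfolding fin_pres_def
proof (intro conjI exI)
  show "rmod S (\<lambda>f g. f \<circ> g) (end_one M) (\<lambda>f g. f \<circ> g) I" by (rule mI)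
  show "rhom S (free_act (\<lambda>f g. f \<circ> g) {..<n}) (free_mod S {..<n}) (\<lambda>f g. f \<circ> g) I pi0"
    using pi0_rhom unfolding fa_def V_def .
  show "pi0 ` free_mod S {..<n} = I" using pi0_img unfolding V_def .
  have "set ks \<subseteq> kernel V pi0" 
  proof
    fix k assume "k \<in> set ks"
    then obtain i where "i < length ks" "k = ks ! i" by (metis in_set_conv_nth)
    then show "k \<in> kernel V pi0" using ks_k unfolding kernel_def ks_def by auto
  qed
  then show "fgen S (free_act (\<lambda>f g. f \<circ> g) {..<n}) (kernel (free_mod S {..<n}) pi0)"
    unfolding fgen_def fa_def[symmetric] V_def[symmetric] using ker_eq by blast
qed

abbreviation "X \<equiv> set xs"
definition VX :: "(('m \<Rightarrow> 'm) \<Rightarrow> 'm \<Rightarrow> 'm) set" where "VX = free_mod S X"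
definition fX :: "(('m \<Rightarrow> 'm) \<Rightarrow> 'm \<Rightarrow> 'm) \<Rightarrow> ('m \<Rightarrow> 'm) \<Rightarrow> ('m \<Rightarrow> 'm) \<Rightarrow> 'm \<Rightarrow> 'm"
  where "fX = free_act (\<lambda>f g. f \<circ> g) X"
definition "piX v = (\<Sum>h\<in>X. h \<circ> v h)"
definition G :: "(nat \<Rightarrow> 'm \<Rightarrow> 'm) \<Rightarrow> ('m \<Rightarrow> 'm) \<Rightarrow> 'm \<Rightarrow> 'm"
  where "G w = (\<lambda>h. if h \<in> X then (\<Sum>i\<in>{i. i \<in> {..<n} \<and> xs ! i = h}. w i) else 0)"
definition "iota g = G (Q (sel g))"

lemma XS: "h \<in> X \<Longrightarrow> h \<in> S" using xsS by blast

lemma VX_iff: "v \<in> VX \<longleftrightarrow> (\<forall>h. v h \<in> S) \<and> (\<forall>h. h \<notin> X \<longrightarrow> v h = 0)"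
proof
  assume v: "v \<in> VX"
  show "(\<forall>h. v h \<in> S) \<and> (\<forall>h. h \<notin> X \<longrightarrow> v h = 0)"
  proof (intro conjI allI impI)
    fix h show "v h \<in> S" using v S_zero unfolding VX_def free_mod_def by (cases "h \<in> X") auto
  next
    fix h assume "h \<notin> X" then show "v h = 0" using v unfolding VX_def free_mod_def by auto
  qed
next
  assume a: "(\<forall>h. v h \<in> S) \<and> (\<forall>h. h \<notin> X \<longrightarrow> v h = 0)"
  then have "{i. v i \<noteq> 0} \<subseteq> X" by auto
  then have "finite {i. v i \<noteq> 0}" using finite_subset by blast
  with a show "v \<in> VX" unfolding VX_def free_mod_def by auto
qed

lemma fX_apply: "fX v r h = (if h \<in> X then v h \<circ> r else 0)"
  unfolding fX_def free_act_def by simp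

lemma G_VX: "w \<in> V \<Longrightarrow> G w \<in> VX"
  unfolding VX_iff G_def V_iff using S_zero by (auto intro!: S_sum)

lemma G_add: "G (w + u) = G w + G u"
  unfolding G_def by (auto simp: fun_eq_iff sum.distrib)

lemma G_fa: "G (fa w r) = fX (G w) r"
proof (rule ext)
  fix h show "G (fa w r) h = fX (G w) r h"
  proof (cases "h \<in> X")
    case True
    have "G (fa w r) h = (\<Sum>i\<in>{i. i \<in> {..<n} \<and> xs ! i = h}. w i \<circ> r)"
      unfolding G_def using True by (auto simp: fa_apply intro!: sum.cong)
    also have "\<dots> = (\<Sum>i\<in>{i. i \<in> {..<n} \<and> xs ! i = h}. w i) \<circ> r" by (simp add: comp_sum_left)
    finally show ?thesis unfolding fX_apply G_def using True by simp
  next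
    case False then show ?thesis unfolding fX_apply G_def by simp
  qed
qed

lemma piX_G: "w \<in> V \<Longrightarrow> piX (G w) = pi0 w"
proof -
  assume w: "w \<in> V"
  have "piX (G w) = (\<Sum>h\<in>X. (\<Sum>i\<in>{i. i \<in> {..<n} \<and> xs ! i = h}. xs ! i \<circ> w i))"
    unfolding piX_def G_def
  proof (intro sum.cong refl)
    fix h assume h: "h \<in> X"
    then have "h \<circ> (\<Sum>i\<in>{i. i \<in> {..<n} \<and> xs ! i = h}. w i) = (\<Sum>i\<in>{i. i \<in> {..<n} \<and> xs ! i = h}. h \<circ> w i)"
      using w V_iff XS by (intro comp_sum_right) auto
    also have "\<dots> = (\<Sum>i\<in>{i. i \<in> {..<n} \<and> xs ! i = h}. xs ! i \<circ> w i)" by (intro sum.cong) auto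
    finally show "h \<circ> (if h \<in> X then \<Sum>i\<in>{i. i \<in> {..<n} \<and> xs ! i = h}. w i else 0) =
         (\<Sum>i\<in>{i. i \<in> {..<n} \<and> xs ! i = h}. xs ! i \<circ> w i)" using h by simp
  qed
  also have "\<dots> = (\<Sum>i<n. xs ! i \<circ> w i)"
    by (rule sum.group) auto
  finally show ?thesis unfolding pi0_def .
qed

lemma piX_rhom: "rhom S fX VX (\<lambda>f g. f \<circ> g) I piX"
  unfolding rhom_def
proof (intro conjI ballI)
  fix v assume v: "v \<in> VX"
  have "h \<circ> v h \<in> I" if "h \<in> X" for h
    using I_comp xsI that v VX_iff by blast
  then show "piX v \<in> I" unfolding piX_def by (intro rmod_sum[OF mI]) auto
next
  fix v w assume "v \<in> VX" "w \<in> VX"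
  then show "piX (v + w) = piX v + piX w"
    unfolding piX_def VX_iff by (simp add: comp_add_right XS sum.distrib)
next
  fix v r assume "v \<in> VX" "r \<in> S"
  then show "piX (fX v r) = piX v \<circ> r"
    unfolding piX_def comp_sum_left by (intro sum.cong) (auto simp: fX_apply comp_assoc)
qed

lemma iota_VX: "g \<in> I \<Longrightarrow> iota g \<in> VX"
  unfolding iota_def using sel Q_V G_VX by blast

lemma piX_iota: "g \<in> I \<Longrightarrow> piX (iota g) = g"
  unfolding iota_def using sel Q_V piX_G pi0_Q by metis

lemma iota_rhom: "rhom S (\<lambda>f g. f \<circ> g) I fX VX iota"
  unfolding rhom_def
proof (intro conjI ballI)
  fix g assume "g \<in> I" then show "iota g \<in> VX" by (rule iota_VX)
next
  fix g h assume gh: "g \<in> I" "h \<in> I"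
  then have "Q (sel (g + h)) = Q (sel g + sel h)"
    using sel[of "g+h"] sel[of g] sel[of h] I_add V_add pi0_add by (intro Q_eq) auto
  then show "iota (g + h) = iota g + iota h"
    unfolding iota_def using gh sel Q_add G_add by metis
next
  fix g r assume gr: "g \<in> I" "r \<in> S"
  then have "Q (sel (g \<circ> r)) = Q (fa (sel g) r)"
    using sel[of "g \<circ> r"] sel[of g] I_comp V_fa pi0_fa by (intro Q_eq) auto
  then show "iota (g \<circ> r) = fX (iota g) r"
    unfolding iota_def using gr sel Q_fa G_fa by metis
qed

lemma proj_I: "projective S (\<lambda>f g. f \<circ> g) (end_one M) (\<lambda>f g. f \<circ> g) I"
  unfolding projective_def
proof (intro conjI exI)
  show "rmod S (\<lambda>f g. f \<circ> g) (end_one M) (\<lambda>f g. f \<circ> g) I" by (rule mI)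
  show "rhom S (free_act (\<lambda>f g. f \<circ> g) X) (free_mod S X) (\<lambda>f g. f \<circ> g) I piX"
    using piX_rhom unfolding fX_def VX_def .
  show "piX ` free_mod S X = I"
    using piX_rhom piX_iota iota_VX unfolding VX_def[symmetric] rhom_def by (metis image_eqI subsetI subset_antisym image_subsetI)
  show "rhom S (\<lambda>f g. f \<circ> g) I (free_act (\<lambda>f g. f \<circ> g) X) (free_mod S X) iota"
    using iota_rhom unfolding fX_def VX_def .
  show "\<forall>x\<in>I. piX (iota x) = x" using piX_iota by blast
qed

end




theorem mainTheorem15:
  fixes act :: "'m::ab_group_add \<Rightarrow> 'r::ring_1 \<Rightarrow> 'm" and M :: "'m set"
  assumes "rmod UNIV (*) 1 act M"
    and "fin_sigma_rickart UNIV (*) 1 act M"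
  shows "right_semihereditary (endos UNIV act M) (\<lambda>f g. f \<circ> g) (end_one M)
       \<and> right_coherent (endos UNIV act M) (\<lambda>f g. f \<circ> g) (end_one M)
       \<and> (\<forall>N. submod UNIV (*) 1 act N M \<and> fin_M_gen UNIV act M act N
              \<longrightarrow> M_coherent UNIV act M act N)"
proof -
  have key: "projective (endos UNIV act M) (\<lambda>f g. f \<circ> g) (end_one M) (\<lambda>f g. f \<circ> g) I
     \<and> fin_pres (endos UNIV act M) (\<lambda>f g. f \<circ> g) (end_one M) (\<lambda>f g. f \<circ> g) I"
    if RI: "right_ideal (endos UNIV act M) (\<lambda>f g. f \<circ> g) (end_one M) I"
      and fg: "fgen (endos UNIV act M) (\<lambda>f g. f \<circ> g) I" for I
  proof -
    obtain xs where xs: "set xs \<subseteq> I"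
      "I = {\<Sum>i<length xs. xs ! i \<circ> rs i |rs. \<forall>i<length xs. rs i \<in> endos UNIV act M}"
      using fg unfolding fgen_def by auto
    have "I \<subseteq> endos UNIV act M" using RI unfolding right_ideal_def by blast
    then interpret isetting act M xs I
      using assms RI xs by unfold_locales auto
    show ?thesis using proj_I fin_pres_I by blast
  qed
  show ?thesis
    unfolding right_semihereditary_def right_coherent_def
    using key part3[OF assms] by blast
qed


end
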